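(* For any solution as in the context, $$e^{\mu(t,\theta)-\lambda(t,\theta)}\le e^{\mathring\mu(\theta)-\mathring\lambda(\theta)}\frac{e^{-2\mathring\mu(\theta)}t}{e^{-2\mathring\mu(\theta)}-1+t}\le e^{|\mathring\mu(\theta)|-\mathring\lambda(\theta)},\qquad t\ge1,\ \theta\in[0,1].$$
   Context: Setting: $\mu,\lambda$ are functions of $(t,\theta)$, $t\ge1$, 1-periodic in $\theta$, and $f=f(t,\theta,w,L)\ge0$ ($w\in\mathbb R$, $L\ge0$) solve the Einstein–Vlasov system with hyperbolic symmetry in areal coordinates (metric $-e^{2\mu}dt^2+e^{2\lambda}d\theta^2+t^2(d\psi^2+\sinh^2\psi\,d\phi^2)$): $$\partial_t f+\frac{e^{\mu-\lambda}w}{\sqrt{1+w^2+L/t^2}}\partial_\theta f-\Big(\lambda_t w+e^{\mu-\lambda}\mu_\theta\sqrt{1+w^2+L/t^2}\Big)\partial_w f=0,$$ $$e^{-2\mu}(2t\lambda_t+1)-1=8\pi t^2\rho,\qquad e^{-2\mu}(2t\mu_t-1)+1=8\pi t^2 p,\qquad \mu_\theta=-4\pi t e^{\mu+\lambda}j,$$ $$e^{-2\lambda}\big(\mu_{\theta\theta}+\mu_\theta(\mu_\theta-\lambda_\theta)\big)-e^{-2\mu}\big(\lambda_{tt}+(\lambda_t+1/t)(\lambda_t-\mu_t)\big)=4\pi q,$$ with $\rho=\frac{\pi}{t^2}\int_{-\infty}^\infty\int_0^\infty\sqrt{1+w^2+L/t^2}\,f\,dL\,dw$, $p=\frac{\pi}{t^2}\int\int\frac{w^2}{\sqrt{1+w^2+L/t^2}}f\,dL\,dw$,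 $j=\frac{\pi}{t^2}\int\int wf\,dL\,dw$, $q=\frac{\pi}{t^4}\int\int\frac{L}{\sqrt{1+w^2+L/t^2}}f\,dL\,dw$. Initial data at $t=1$: $\mathring f,\mathring\lambda,\mathring\mu$, $C^1$, 1-periodic, $\mathring f$ compactly supported in $(w,L)$, satisfying the constraint at $t=1$; the $C^1$ solution exists for all $t\ge1$. *)

theory Defs
  imports "HOL-Analysis.Analysis"
begin

text \<open>Einstein--Vlasov system with hyperbolic symmetry in areal coordinates.\<close>

definition Tdom :: "real set" where "Tdom = {1..}"

definition pt :: "(real \<Rightarrow> real \<Rightarrow> real) \<Rightarrow> real \<Rightarrow> real \<Rightarrow> real" where
  "pt u t th = vector_derivative (\<lambda>s. u s th) (at t within Tdom)"
definition pth :: "(real \<Rightarrow> real \<Rightarrow> real) \<Rightarrow> real \<Rightarrow> real \<Rightarrow> real" where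
  "pth u t th = vector_derivative (\<lambda>x. u t x) (at th)"

definition ft :: "(real \<Rightarrow> real \<Rightarrow> real \<Rightarrow> real \<Rightarrow> real) \<Rightarrow> real \<Rightarrow> real \<Rightarrow> real \<Rightarrow> real \<Rightarrow> real" where
  "ft f t th w L = vector_derivative (\<lambda>s. f s th w L) (at t within Tdom)"
definition fth :: "(real \<Rightarrow> real \<Rightarrow> real \<Rightarrow> real \<Rightarrow> real) \<Rightarrow> real \<Rightarrow> real \<Rightarrow> real \<Rightarrow> real \<Rightarrow> real" where
  "fth f t th w L = vector_derivative (\<lambda>x. f t x w L) (at th)"
definition fw :: "(real \<Rightarrow> real \<Rightarrow> real \<Rightarrow> real \<Rightarrow> real) \<Rightarrow> real \<Rightarrow> real \<Rightarrow> real \<Rightarrow> real \<Rightarrow> real" where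
  "fw f t th w L = vector_derivative (\<lambda>x. f t th x L) (at w)"
definition fL :: "(real \<Rightarrow> real \<Rightarrow> real \<Rightarrow> real \<Rightarrow> real) \<Rightarrow> real \<Rightarrow> real \<Rightarrow> real \<Rightarrow> real \<Rightarrow> real" where
  "fL f t th w L = vector_derivative (\<lambda>x. f t th w x) (at L within {0..})"

definition C1_metric :: "(real \<Rightarrow> real \<Rightarrow> real) \<Rightarrow> bool" where
  "C1_metric u \<longleftrightarrow>
     (\<forall>t\<in>Tdom. \<forall>th. (\<lambda>s. u s th) differentiable (at t within Tdom)
                    \<and> (\<lambda>x. u t x) differentiable (at th)) \<and>
     continuous_on (Tdom \<times> UNIV) (\<lambda>(t, th). u t th) \<and>
     continuous_on (Tdom \<times> UNIV) (\<lambda>(t, th). pt u t th) \<and>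
     continuous_on (Tdom \<times> UNIV) (\<lambda>(t, th). pth u t th)"

definition C1_distr :: "(real \<Rightarrow> real \<Rightarrow> real \<Rightarrow> real \<Rightarrow> real) \<Rightarrow> bool" where
  "C1_distr f \<longleftrightarrow>
     (\<forall>t\<in>Tdom. \<forall>th w. \<forall>L\<in>{0..}.
         (\<lambda>s. f s th w L) differentiable (at t within Tdom)
       \<and> (\<lambda>x. f t x w L) differentiable (at th)
       \<and> (\<lambda>x. f t th x L) differentiable (at w)
       \<and> (\<lambda>x. f t th w x) differentiable (at L within {0..})) \<and>
     continuous_on (Tdom \<times> UNIV \<times> UNIV \<times> {0..}) (\<lambda>(t, th, w, L). f t th w L) \<and>
     continuous_on (Tdom \<times> UNIV \<times> UNIV \<times> {0..}) (\<lambda>(t, th, w, L). ft f t th w L) \<and>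
     continuous_on (Tdom \<times> UNIV \<times> UNIV \<times> {0..}) (\<lambda>(t, th, w, L). fth f t th w L) \<and>
     continuous_on (Tdom \<times> UNIV \<times> UNIV \<times> {0..}) (\<lambda>(t, th, w, L). fw f t th w L) \<and>
     continuous_on (Tdom \<times> UNIV \<times> UNIV \<times> {0..}) (\<lambda>(t, th, w, L). fL f t th w L)"

definition mom_int :: "(real \<Rightarrow> real \<Rightarrow> real) \<Rightarrow> real" where
  "mom_int g = (LINT w|lborel. set_lebesgue_integral lborel {0..} (\<lambda>L. g w L))"

definition rho :: "(real \<Rightarrow> real \<Rightarrow> real \<Rightarrow> real \<Rightarrow> real) \<Rightarrow> real \<Rightarrow> real \<Rightarrow> real" where
  "rho f t th = pi / t^2 * mom_int (\<lambda>w L. sqrt (1 + w^2 + L / t^2) * f t th w L)"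
definition pp :: "(real \<Rightarrow> real \<Rightarrow> real \<Rightarrow> real \<Rightarrow> real) \<Rightarrow> real \<Rightarrow> real \<Rightarrow> real" where
  "pp f t th = pi / t^2 * mom_int (\<lambda>w L. w^2 / sqrt (1 + w^2 + L / t^2) * f t th w L)"
definition jj :: "(real \<Rightarrow> real \<Rightarrow> real \<Rightarrow> real \<Rightarrow> real) \<Rightarrow> real \<Rightarrow> real \<Rightarrow> real" where
  "jj f t th = pi / t^2 * mom_int (\<lambda>w L. w * f t th w L)"
definition qq :: "(real \<Rightarrow> real \<Rightarrow> real \<Rightarrow> real \<Rightarrow> real) \<Rightarrow> real \<Rightarrow> real \<Rightarrow> real" where
  "qq f t th = pi / t^4 * mom_int (\<lambda>w L. L / sqrt (1 + w^2 + L / t^2) * f t th w L)"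

definition EV_solution ::
  "(real \<Rightarrow> real \<Rightarrow> real) \<Rightarrow> (real \<Rightarrow> real \<Rightarrow> real) \<Rightarrow> (real \<Rightarrow> real \<Rightarrow> real \<Rightarrow> real \<Rightarrow> real) \<Rightarrow> bool"
where
  "EV_solution mu lam f \<longleftrightarrow>
     C1_metric mu \<and> C1_metric lam \<and> C1_distr f \<and>
     \<comment> \<open>1-periodicity in theta\<close>
     (\<forall>t\<in>Tdom. \<forall>th. mu t (th + 1) = mu t th \<and> lam t (th + 1) = lam t th) \<and>
     (\<forall>t\<in>Tdom. \<forall>th w L. f t (th + 1) w L = f t th w L) \<and>
     \<comment> \<open>nonnegativity of f\<close>
     (\<forall>t\<in>Tdom. \<forall>th w. \<forall>L\<in>{0..}. 0 \<le> f t th w L) \<and>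
     \<comment> \<open>compact support in (w, L) at every time\<close>
     (\<forall>t\<in>Tdom. \<exists>R. \<forall>th w L. L \<ge> 0 \<longrightarrow> (\<bar>w\<bar> > R \<or> L > R) \<longrightarrow> f t th w L = 0) \<and>
     \<comment> \<open>Vlasov equation\<close>
     (\<forall>t\<in>Tdom. \<forall>th w. \<forall>L\<in>{0..}.
        ft f t th w L
        + exp (mu t th - lam t th) * w / sqrt (1 + w^2 + L / t^2) * fth f t th w L
        - (pt lam t th * w + exp (mu t th - lam t th) * pth mu t th * sqrt (1 + w^2 + L / t^2))
            * fw f t th w L = 0) \<and>
     \<comment> \<open>field equations\<close>
     (\<forall>t\<in>Tdom. \<forall>th.
        exp (-2 * mu t th) * (2 * t * pt lam t th + 1) - 1 = 8 * pi * t^2 * rho f t th) \<and>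
     (\<forall>t\<in>Tdom. \<forall>th.
        exp (-2 * mu t th) * (2 * t * pt mu t th - 1) + 1 = 8 * pi * t^2 * pp f t th) \<and>
     (\<forall>t\<in>Tdom. \<forall>th.
        pth mu t th = - 4 * pi * t * exp (mu t th + lam t th) * jj f t th) \<and>
     \<comment> \<open>second order equation (the second derivatives occurring in it exist)\<close>
     (\<forall>t\<in>Tdom. \<forall>th.
        (\<lambda>s. pt lam s th) differentiable (at t within Tdom) \<and>
        (\<lambda>x. pth mu t x) differentiable (at th)) \<and>
     (\<forall>t\<in>Tdom. \<forall>th.
        exp (-2 * lam t th) * (pth (pth mu) t th + pth mu t th * (pth mu t th - pth lam t th))
        - exp (-2 * mu t th) * (pt (pt lam) t th + (pt lam t th + 1 / t) * (pt lam t th - pt mu t th))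
        = 4 * pi * qq f t th)"

end

theory Submission
  imports Defs
begin

lemma mom_integrable:
  fixes g :: "real \<Rightarrow> real \<Rightarrow> real"
  assumes cont: "continuous_on (UNIV \<times> {0..}) (\<lambda>(w,L). g w L)"
    and supp: "\<forall>w L. L \<ge> 0 \<longrightarrow> (\<bar>w\<bar> > R \<or> L > R) \<longrightarrow> g w L = 0"
  shows "set_integrable lborel {0..} (g w)"
    and "integrable lborel (\<lambda>w. set_lebesgue_integral lborel {0..} (g w))"
proof -
  define R' where "R' = max R 0"
  have R'0: "R' \<ge> 0" by (simp add: R'_def)
  have supp': "g w L = 0" if "L \<ge> 0" "\<bar>w\<bar> > R' \<or> L > R'" for w L
    using supp that by (auto simp: R'_def)
  define K where "K = {-R'..R'} \<times> {0..R'}"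
  have cK: "compact K" unfolding K_def by (intro compact_Times compact_Icc)
  have contK: "continuous_on K (\<lambda>(w,L). g w L)"
    using cont by (rule continuous_on_subset) (auto simp: K_def)
  have "bounded ((\<lambda>(w,L). g w L) ` K)"
    using compact_continuous_image[OF contK cK] by (rule compact_imp_bounded)
  then obtain M0 where M0: "\<And>z. z \<in> K \<Longrightarrow> norm ((\<lambda>(w,L). g w L) z) \<le> M0"
    unfolding bounded_iff by blast
  define M where "M = max M0 0"
  have M0': "M \<ge> 0" by (simp add: M_def)
  have bnd: "\<bar>g w L\<bar> \<le> M" if "L \<ge> 0" for w L
  proof (cases "(w,L) \<in> K")
    case True then show ?thesis using M0[OF True] by (auto simp: M_def)
  next
    case False
    then have "\<bar>w\<bar> > R' \<or> L > R'" using that by (auto simp: K_def)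
    then show ?thesis using supp' that M0' by auto
  qed
  have inner: "set_integrable lborel {0..} (g w)" for w
  proof -
    have "continuous_on {0..R'} (g w)"
    proof -
      have "continuous_on {0..R'} ((\<lambda>(w,L). g w L) \<circ> (\<lambda>L. (w,L)))"
        by (intro continuous_on_compose continuous_intros continuous_on_subset[OF cont]) auto
      then show ?thesis by (simp add: o_def)
    qed
    then have "integrable lborel (\<lambda>L. indicator {0..R'} L *\<^sub>R g w L)"
      by (intro borel_integrable_compact) auto
    moreover have "(\<lambda>L. indicator {0..R'} L *\<^sub>R g w L) = (\<lambda>L. indicator {0..} L *\<^sub>R g w L)"
      using supp'[of _ w] by (intro ext) (auto simp: indicator_def)
    ultimately show ?thesis unfolding set_integrable_def by metis
  qed
  then show "set_integrable lborel {0..} (g w)" .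
  have meas: "(\<lambda>w. set_lebesgue_integral lborel {0..} (g w)) \<in> borel_measurable lborel"
  proof -
    have "(\<lambda>z. indicator (UNIV \<times> {0..}) z *\<^sub>R (\<lambda>(w,L). g w L) z) \<in> borel_measurable borel"
      by (intro borel_measurable_continuous_on_indicator cont) (auto intro: borel_closed closed_Times)
    then have "(\<lambda>(w,L). indicator {0..} L *\<^sub>R g w L) \<in> borel_measurable (lborel \<Otimes>\<^sub>M lborel)"
    proof -
      have "(\<lambda>(w,L). indicator {0..} L *\<^sub>R g w L) = (\<lambda>z. indicator (UNIV \<times> {0..}) z *\<^sub>R (\<lambda>(w,L). g w L) z)"
        by (auto simp: indicator_def fun_eq_iff)
      with \<open>_ \<in> borel_measurable borel\<close> show ?thesis unfolding lborel_prod by (simp cong: measurable_cong_sets)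
    qed
    then have "(\<lambda>w. \<integral>L. indicator {0..} L *\<^sub>R g w L \<partial>lborel) \<in> borel_measurable lborel"
      by (rule lborel.borel_measurable_lebesgue_integral)
    then show ?thesis by (simp add: set_lebesgue_integral_def)
  qed
  have bndh: "norm (set_lebesgue_integral lborel {0..} (g w)) \<le> norm (indicator {-R'..R'} w *\<^sub>R (M * R'))" for w
  proof (cases "\<bar>w\<bar> \<le> R'")
    case False
    then have "(\<lambda>L. indicator {0..} L *\<^sub>R g w L) = (\<lambda>L. 0)" using supp'[of _ w] by (intro ext) (auto simp: indicator_def)
    then show ?thesis by (simp add: set_lebesgue_integral_def)
  next
    case True
    have "norm (set_lebesgue_integral lborel {0..} (g w)) \<le> (LINT L:{0..}|lborel. norm (g w L))"
      by (rule set_integral_norm_bound[OF inner])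
    also have "\<dots> = (LINT L:{0..R'}|lborel. norm (g w L))"
    proof -
      have "(\<lambda>L. indicator {0..} L *\<^sub>R norm (g w L)) = (\<lambda>L. indicator {0..R'} L *\<^sub>R norm (g w L))"
        using supp'[of _ w] by (intro ext) (auto simp: indicator_def)
      then show ?thesis unfolding set_lebesgue_integral_def by metis
    qed
    also have "\<dots> \<le> (LINT L:{0..R'}|lborel. M)"
    proof (rule set_integral_mono)
      show "set_integrable lborel {0..R'} (\<lambda>L. norm (g w L))"
      proof -
        have "set_integrable lborel {0..R'} (g w)"
        proof -
          have "(\<lambda>L. indicator {0..R'} L *\<^sub>R g w L) = (\<lambda>L. indicator {0..} L *\<^sub>R g w L)"
            using supp'[of _ w] by (intro ext) (auto simp: indicator_def)
          then show ?thesis using inner[of w] unfolding set_integrable_def by metis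
        qed
        then show ?thesis by (rule set_integrable_norm)
      qed
      show "set_integrable lborel {0..R'} (\<lambda>L. M)"
        unfolding set_integrable_def by (intro borel_integrable_compact) auto
    qed (use bnd in auto)
    also have "\<dots> = M * R'" using R'0 by (simp add: set_lebesgue_integral_def integral_mult_left_zero mult.commute)
    finally show ?thesis using True M0' R'0 by (auto simp: indicator_def abs_le_iff)
  qed
  show "integrable lborel (\<lambda>w. set_lebesgue_integral lborel {0..} (g w))"
  proof (rule Bochner_Integration.integrable_bound[OF _ meas])
    show "integrable lborel (\<lambda>w. indicator {-R'..R'} w *\<^sub>R (M * R'))"
      by (intro borel_integrable_compact) auto
    show "AE w in lborel. norm (set_lebesgue_integral lborel {0..} (g w)) \<le> norm (indicator {-R'..R'} w *\<^sub>R (M * R'))"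
      using bndh by auto
  qed
qed

lemma mom_mono:
  fixes g h :: "real \<Rightarrow> real \<Rightarrow> real"
  assumes "continuous_on (UNIV \<times> {0..}) (\<lambda>(w,L). g w L)"
    and "\<forall>w L. L \<ge> 0 \<longrightarrow> (\<bar>w\<bar> > R \<or> L > R) \<longrightarrow> g w L = 0"
    and "continuous_on (UNIV \<times> {0..}) (\<lambda>(w,L). h w L)"
    and "\<forall>w L. L \<ge> 0 \<longrightarrow> (\<bar>w\<bar> > R \<or> L > R) \<longrightarrow> h w L = 0"
    and "\<And>w L. L \<ge> 0 \<Longrightarrow> g w L \<le> h w L"
  shows "mom_int g \<le> mom_int h"
  unfolding mom_int_def
proof (rule integral_mono)
  show "integrable lborel (\<lambda>w. set_lebesgue_integral lborel {0..} (g w))"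
    using mom_integrable(2)[OF assms(1,2)] .
  show "integrable lborel (\<lambda>w. set_lebesgue_integral lborel {0..} (h w))"
    using mom_integrable(2)[OF assms(3,4)] .
  fix w
  show "set_lebesgue_integral lborel {0..} (g w) \<le> set_lebesgue_integral lborel {0..} (h w)"
    by (rule set_integral_mono[OF mom_integrable(1)[OF assms(1,2)] mom_integrable(1)[OF assms(3,4)]])
      (use assms(5) in auto)
qed

lemma mom_nonneg:
  assumes "\<And>w L. L \<ge> 0 \<Longrightarrow> 0 \<le> g w L"
  shows "0 \<le> mom_int g"
  unfolding mom_int_def set_lebesgue_integral_def
  by (intro integral_nonneg_AE AE_I2 integral_nonneg_AE AE_I2) (auto simp: indicator_def assms)

lemma p_le_rho:
  assumes "EV_solution mu lam f" "s \<ge> 1"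
  shows "0 \<le> pp f s th \<and> pp f s th \<le> rho f s th"
proof -
  have sT: "s \<in> Tdom" using assms(2) by (simp add: Tdom_def)
  have C: "continuous_on (Tdom \<times> UNIV \<times> UNIV \<times> {0..}) (\<lambda>(t, th, w, L). f t th w L)"
    using assms(1) by (simp add: EV_solution_def C1_distr_def)
  have nn: "\<And>w L. L \<ge> 0 \<Longrightarrow> 0 \<le> f s th w L"
    using assms(1) sT by (simp add: EV_solution_def)
  have "\<exists>R. \<forall>th w L. L \<ge> 0 \<longrightarrow> (\<bar>w\<bar> > R \<or> L > R) \<longrightarrow> f s th w L = 0"
    using assms(1) sT unfolding EV_solution_def by auto
  then obtain R where R: "\<forall>w L. L \<ge> 0 \<longrightarrow> (\<bar>w\<bar> > R \<or> L > R) \<longrightarrow> f s th w L = 0"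
    by blast
  have fc: "continuous_on (UNIV \<times> {0..}) (\<lambda>z. f s th (fst z) (snd z))"
  proof -
    have "continuous_on (UNIV \<times> {0..}) ((\<lambda>(t, th, w, L). f t th w L) \<circ> (\<lambda>z. (s, th, fst z, snd z)))"
    proof (rule continuous_on_compose)
      show "continuous_on (UNIV \<times> {0..}) (\<lambda>z. (s, th, fst z, snd z))" by (intro continuous_intros)
      show "continuous_on ((\<lambda>z. (s, th, fst z, snd z)) ` (UNIV \<times> {0..})) (\<lambda>(t, th, w, L). f t th w L)"
        by (rule continuous_on_subset[OF C]) (use sT in auto)
    qed
    then show ?thesis by (simp add: o_def case_prod_beta)
  qed
  have pos: "0 < 1 + w^2 + L / s^2" if "L \<ge> 0" for w L :: real
    using that by (simp add: add_pos_nonneg)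
  have sq: "continuous_on (UNIV \<times> {0..}) (\<lambda>z. sqrt (1 + (fst z)^2 + snd z / s^2) :: real)"
    using assms(2) by (intro continuous_intros) auto
  have c1: "continuous_on (UNIV \<times> {0..}) (\<lambda>(w,L). sqrt (1 + w^2 + L / s^2) * f s th w L)"
    unfolding case_prod_beta by (intro continuous_intros sq fc)
  have c2: "continuous_on (UNIV \<times> {0..}) (\<lambda>(w,L). w^2 / sqrt (1 + w^2 + L / s^2) * f s th w L)"
    unfolding case_prod_beta
  proof (intro continuous_intros sq fc ballI)
    fix z :: "real \<times> real" assume "z \<in> UNIV \<times> {0..}"
    then show "sqrt (1 + (fst z)^2 + snd z / s^2) \<noteq> 0" using pos[of "snd z" "fst z"] by auto
  qed (use assms(2) in auto)
  have le: "w^2 / sqrt (1 + w^2 + L / s^2) * f s th w L \<le> sqrt (1 + w^2 + L / s^2) * f s th w L"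
    if "L \<ge> 0" for w L
  proof (rule mult_right_mono[OF _ nn[OF that]])
    have p: "0 < 1 + w^2 + L / s^2" by (rule pos[OF that])
    have "w^2 \<le> 1 + w^2 + L / s^2" using that by simp
    also have "\<dots> = sqrt (1 + w^2 + L / s^2) * sqrt (1 + w^2 + L / s^2)" using p by simp
    finally show "w^2 / sqrt (1 + w^2 + L / s^2) \<le> sqrt (1 + w^2 + L / s^2)"
      using p by (simp add: divide_le_eq)
  qed
  have "mom_int (\<lambda>w L. w^2 / sqrt (1 + w^2 + L / s^2) * f s th w L)
        \<le> mom_int (\<lambda>w L. sqrt (1 + w^2 + L / s^2) * f s th w L)"
    by (rule mom_mono[OF c2 _ c1, of R]) (use R le in auto)
  moreover have "0 \<le> mom_int (\<lambda>w L. w^2 / sqrt (1 + w^2 + L / s^2) * f s th w L)"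
    by (rule mom_nonneg) (use nn in auto)
  ultimately show ?thesis unfolding pp_def rho_def
    by (intro conjI mult_nonneg_nonneg mult_left_mono) auto
qed


lemma deriv_pt:
  assumes "C1_metric u" "t \<in> Tdom"
  shows "((\<lambda>s. u s th) has_real_derivative pt u t th) (at t within Tdom)"
proof -
  have "(\<lambda>s. u s th) differentiable (at t within Tdom)"
    using assms by (simp add: C1_metric_def)
  then have "((\<lambda>s. u s th) has_vector_derivative pt u t th) (at t within Tdom)"
    unfolding pt_def by (simp add: vector_derivative_works[symmetric])
  then show ?thesis by (simp add: has_real_derivative_iff_has_vector_derivative)
qed

lemma decr:
  fixes F F' :: "real \<Rightarrow> real"
  assumes "1 \<le> t" "\<And>s. s \<in> {1..t} \<Longrightarrow> (F has_real_derivative F' s) (at s within {1..t})"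
    "\<And>s. s \<in> {1..t} \<Longrightarrow> F' s \<le> 0"
  shows "F t \<le> F 1"
proof -
  have "\<exists>x\<in>{1..t}. F t - F 1 = (\<lambda>x. (*) (F' x)) x (t - 1)"
    by (rule mvt_very_simple[OF assms(1), of F "\<lambda>x. (*) (F' x)"])
      (use assms(2) in \<open>auto simp: has_field_derivative_def\<close>)
  then obtain x where x: "x \<in> {1..t}" "F t - F 1 = F' x * (t - 1)" by auto
  then have "F t - F 1 = (t - 1) * F' x" by simp
  also have "\<dots> \<le> 0" using assms(1) assms(3)[OF x(1)] by (simp add: mult_nonneg_nonpos)
  finally show ?thesis by simp
qed

theorem mainTheorem4:
  fixes mu lam :: "real \<Rightarrow> real \<Rightarrow> real"
    and f :: "real \<Rightarrow> real \<Rightarrow> real \<Rightarrow> real \<Rightarrow> real"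
  assumes "EV_solution mu lam f"
    and "t \<ge> 1" and "th \<in> {0..1}"
  shows "exp (mu t th - lam t th)
           \<le> exp (mu 1 th - lam 1 th)
              * (exp (-2 * mu 1 th) * t / (exp (-2 * mu 1 th) - 1 + t))
       \<and> exp (mu 1 th - lam 1 th)
              * (exp (-2 * mu 1 th) * t / (exp (-2 * mu 1 th) - 1 + t))
           \<le> exp (\<bar>mu 1 th\<bar> - lam 1 th)"
proof -
  note EV = assms(1)
  have Cmu: "C1_metric mu" and Clam: "C1_metric lam" using EV by (auto simp: EV_solution_def)
  have eq1: "\<And>s. s \<in> Tdom \<Longrightarrow> exp (-2 * mu s th) * (2 * s * pt lam s th + 1) - 1 = 8 * pi * s^2 * rho f s th"
    and eq2: "\<And>s. s \<in> Tdom \<Longrightarrow> exp (-2 * mu s th) * (2 * s * pt mu s th - 1) + 1 = 8 * pi * s^2 * pp f s th"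
    using EV by (auto simp: EV_solution_def)
  have sub: "{1..t} \<subseteq> Tdom" by (auto simp: Tdom_def)
  have Dmu: "((\<lambda>s. mu s th) has_real_derivative pt mu s th) (at s within {1..t})" if "s \<in> {1..t}" for s
    using DERIV_subset[OF deriv_pt[OF Cmu] sub] that sub by blast
  have Dlam: "((\<lambda>s. lam s th) has_real_derivative pt lam s th) (at s within {1..t})" if "s \<in> {1..t}" for s
    using DERIV_subset[OF deriv_pt[OF Clam] sub] that sub by blast
  define y1 where "y1 = exp (-2 * mu 1 th)"
  have y1: "y1 > 0" by (simp add: y1_def)
  have prh: "0 \<le> pp f s th \<and> pp f s th \<le> rho f s th" if "s \<in> {1..t}" for s
    using p_le_rho[OF EV, of s th] that by auto
  have Q: "s * exp (-2 * mu s th) - s \<le> y1 - 1" if s: "s \<in> {1..t}" for s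
  proof -
    have "s * exp (-2 * mu s th) - s \<le> 1 * exp (-2 * mu 1 th) - 1"
    proof (rule decr[where F = "\<lambda>s. s * exp (-2 * mu s th) - s"
          and F' = "\<lambda>s. exp (-2 * mu s th) + s * (exp (-2 * mu s th) * (-2 * pt mu s th)) - 1"])
      show "1 \<le> s" using s by simp
      fix r assume r: "r \<in> {1..s}"
      then have rt: "r \<in> {1..t}" using s by auto
      have rT: "r \<in> Tdom" using rt sub by auto
      show "((\<lambda>s. s * exp (-2 * mu s th) - s) has_real_derivative
              exp (-2 * mu r th) + r * (exp (-2 * mu r th) * (-2 * pt mu r th)) - 1) (at r within {1..s})"
      proof -
        have d: "((\<lambda>s. mu s th) has_real_derivative pt mu r th) (at r within {1..s})"
          by (rule DERIV_subset[OF Dmu[OF rt]]) (use s in auto)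
        show ?thesis using s r by (intro derivative_eq_intros d) (auto intro: d)
      qed
      have "exp (-2 * mu r th) + r * (exp (-2 * mu r th) * (-2 * pt mu r th)) - 1
            = - (8 * pi * r^2 * pp f r th)"
        using eq2[OF rT] by (simp add: algebra_simps)
      also have "\<dots> \<le> 0" using prh[OF rt] by simp
      finally show "exp (-2 * mu r th) + r * (exp (-2 * mu r th) * (-2 * pt mu r th)) - 1 \<le> 0" .
    qed
    then show ?thesis by (simp add: y1_def)
  qed
  have F: "mu t th - lam t th - ln t + ln (y1 - 1 + t) \<le> mu 1 th - lam 1 th - ln 1 + ln (y1 - 1 + 1)"
  proof (rule decr[where F = "\<lambda>s. mu s th - lam s th - ln s + ln (y1 - 1 + s)"
        and F' = "\<lambda>s. pt mu s th - pt lam s th - 1 / s + 1 / (y1 - 1 + s)"])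
    show "1 \<le> t" using assms(2) .
    fix r assume rt: "r \<in> {1..t}"
    have rT: "r \<in> Tdom" using rt sub by auto
    have r1: "r \<ge> 1" using rt by simp
    have ypos: "y1 - 1 + r > 0" using y1 r1 by simp
    show "((\<lambda>s. mu s th - lam s th - ln s + ln (y1 - 1 + s)) has_real_derivative
            pt mu r th - pt lam r th - 1 / r + 1 / (y1 - 1 + r)) (at r within {1..t})"
      using r1 ypos by (intro derivative_eq_intros) (auto intro: Dmu[OF rt] Dlam[OF rt])
    define y where "y = exp (-2 * mu r th)"
    have y: "y > 0" by (simp add: y_def)
    have e1: "y * (2 * r * pt lam r th + 1) - 1 = 8 * pi * r^2 * rho f r th" using eq1[OF rT] by (simp add: y_def)
    have e2: "y * (2 * r * pt mu r th - 1) + 1 = 8 * pi * r^2 * pp f r th" using eq2[OF rT] by (simp add: y_def)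
    have "8 * pi * r^2 * pp f r th \<le> 8 * pi * r^2 * rho f r th"
      using prh[OF rt] by (intro mult_left_mono) auto
    then have "y * (2 * r * pt mu r th - 1) + 1 \<le> y * (2 * r * pt lam r th + 1) - 1" using e1 e2 by linarith
    then have "2 * (r * y) * (pt mu r th - pt lam r th) \<le> 2 * y - 2" by (simp add: algebra_simps)
    then have A: "pt mu r th - pt lam r th \<le> (y - 1) / (r * y)"
      using y r1 by (simp add: pos_le_divide_eq mult.commute)
    have "(y - 1) / (r * y) = 1 / r - 1 / (r * y)" using y r1 by (simp add: field_simps)
    moreover have "1 / (y1 - 1 + r) \<le> 1 / (r * y)"
    proof -
      have "r * y - r \<le> y1 - 1" using Q[OF rt] by (simp add: y_def)
      then have "r * y \<le> y1 - 1 + r" by simp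
      then show ?thesis using y r1 ypos by (intro divide_left_mono mult_pos_pos) auto
    qed
    ultimately show "pt mu r th - pt lam r th - 1 / r + 1 / (y1 - 1 + r) \<le> 0" using A by linarith
  qed
  have ypos: "y1 - 1 + t > 0" using y1 assms(2) by simp
  then have "mu t th - lam t th \<le> (mu 1 th - lam 1 th) + ln (y1 * t / (y1 - 1 + t))"
    using F y1 assms(2) by (simp add: ln_div ln_mult)
  then have "exp (mu t th - lam t th) \<le> exp ((mu 1 th - lam 1 th) + ln (y1 * t / (y1 - 1 + t)))"
    by simp
  also have "\<dots> = exp (mu 1 th - lam 1 th) * (y1 * t / (y1 - 1 + t))"
    using y1 ypos assms(2) by (simp add: exp_add)
  finally have part1: "exp (mu t th - lam t th) \<le> exp (mu 1 th - lam 1 th) * (y1 * t / (y1 - 1 + t))" .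
  have part2: "exp (mu 1 th - lam 1 th) * (y1 * t / (y1 - 1 + t)) \<le> exp (\<bar>mu 1 th\<bar> - lam 1 th)"
  proof (cases "mu 1 th \<ge> 0")
    case True
    then have "y1 \<le> 1" by (simp add: y1_def)
    then have "0 \<le> (1 - y1) * (t - 1)" using assms(2) by simp
    then have "y1 * t \<le> y1 - 1 + t" by (simp add: algebra_simps)
    then have "y1 * t / (y1 - 1 + t) \<le> 1" using ypos by simp
    then have "exp (mu 1 th - lam 1 th) * (y1 * t / (y1 - 1 + t)) \<le> exp (mu 1 th - lam 1 th) * 1"
      by (intro mult_left_mono) auto
    then show ?thesis using True by simp
  next
    case False
    then have "y1 \<ge> 1" by (simp add: y1_def)
    then have "t / (y1 - 1 + t) \<le> 1" using ypos by simp
    have eqE: "exp (mu 1 th - lam 1 th) * y1 = exp (\<bar>mu 1 th\<bar> - lam 1 th)"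
      using False by (simp add: y1_def exp_add[symmetric])
    have "exp (\<bar>mu 1 th\<bar> - lam 1 th) * (t / (y1 - 1 + t)) \<le> exp (\<bar>mu 1 th\<bar> - lam 1 th) * 1"
      using \<open>t / (y1 - 1 + t) \<le> 1\<close> by (intro mult_left_mono) auto
    then show ?thesis using eqE by (metis (no_types) mult.assoc mult_1_right times_divide_eq_right)
  qed
  show ?thesis using part1 part2 by (simp add: y1_def mult.commute)
qed

end
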